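(* Let $0<q<1$, $m\in\{0,1,2,\dots\}$, $\lambda\in\left]0,q^m(1-q)^{-1}\right[$, and let $\mathcal{G}_X(t)=\sum_{j\ge0}t^jp_j(\lambda;q,m)$ be the probability generating function of $X\sim\mathscr{P}(\lambda;q,m)$ (defined in the context). Then: (1) for $m=0$, $\mathcal{G}_X(t)=\dfrac{((1-q)\lambda;q)_\infty}{((1-q)\lambda t;q)_\infty}$ for real $|t|\le1$; (2) for $m\neq0$ and fixed $\lambda>0$ and real $t$ with $0<|t|\le 1$, \[ \lim_{q\to1^-}\mathcal{G}_X(t)=t^m\exp\big(\lambda(t-1)\big)\,L_m^{(0)}\!\left(\lambda\left(2-\left(t+\tfrac1t\right)\right)\right), \] where $L_m^{(0)}(x)=\sum_{k=0}^m\binom{m}{k}\frac{(-x)^k}{k!}$ is the Laguerre polynomial.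
   Context: For $a\in\mathbb{C}$: $(a;q)_0=1$, $(a;q)_n=\prod_{k=0}^{n-1}(1-aq^k)$, $(a;q)_\infty=\prod_{k\ge0}(1-aq^k)$. The Wall polynomial is $P_n(x;a|q)=\sum_{k=0}^n\frac{(q^{-n};q)_k}{(aq;q)_k}\frac{(qx)^k}{(q;q)_k}$. Write $m\wedge j=\min(m,j)$, $m\vee j=\max(m,j)$, $\binom{n}{2}=n(n-1)/2$. For $0<\lambda<q^m/(1-q)$ set $\mathcal{N}_{q,m}(\lambda)=\frac{(q^{1-m}(1-q)\lambda;q)_m}{q^m\,(q^{-m}(1-q)\lambda;q)_\infty}$ and \[ p_j(\lambda;q,m)=\frac{q^{2\binom{m\wedge j}{2}}(1-q)^{|m-j|}\lambda^{|m-j|}}{\mathcal{N}_{q,m}(\lambda)\,q^{mj}(q;q)_j(q;q)_m}\left(\frac{(q;q)_{m\vee j}}{(q;q)_{|m-j|}}P_{m\wedge j}\big((1-q)\lambda;q^{|m-j|}\,|\,q\big)\right)^2,\quad j=0,1,2,\dots, \] the probability mass function of the generalized Euler distribution $\mathscr{P}(\lambda;q,m)$. Note that $\lambda<q^m/(1-q)$ holds for all $q$ close enough to $1$. *)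

theory Defs
  imports "HOL-Analysis.Analysis"
begin

definition qpoch :: "real \<Rightarrow> real \<Rightarrow> nat \<Rightarrow> real" where
  "qpoch a q n = (\<Prod>k<n. 1 - a * q ^ k)"

definition qpoch_inf :: "real \<Rightarrow> real \<Rightarrow> real" where
  "qpoch_inf a q = (\<Prod>k. 1 - a * q ^ k)"

definition wall :: "nat \<Rightarrow> real \<Rightarrow> real \<Rightarrow> real \<Rightarrow> real" where
  "wall n x a q = (\<Sum>k\<le>n. qpoch (inverse (q ^ n)) q k / qpoch (a * q) q k
                       * (q * x) ^ k / qpoch q q k)"

definition normN :: "real \<Rightarrow> nat \<Rightarrow> real \<Rightarrow> real" where
  "normN q m lam = qpoch ((q / q ^ m) * (1 - q) * lam) q m
      / (q ^ m * qpoch_inf (inverse (q ^ m) * (1 - q) * lam) q)"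

definition adiff :: "nat \<Rightarrow> nat \<Rightarrow> nat" where
  "adiff m j = max m j - min m j"

definition gen_euler_pmf :: "real \<Rightarrow> real \<Rightarrow> nat \<Rightarrow> nat \<Rightarrow> real" where
  "gen_euler_pmf lam q m j =
     q ^ (2 * (min m j choose 2)) * (1 - q) ^ adiff m j * lam ^ adiff m j
     / (normN q m lam * q ^ (m * j) * qpoch q q j * qpoch q q m)
     * (qpoch q q (max m j) / qpoch q q (adiff m j)
        * wall (min m j) ((1 - q) * lam) (q ^ adiff m j) q) ^ 2"

definition gen_euler_pgf :: "real \<Rightarrow> real \<Rightarrow> nat \<Rightarrow> real \<Rightarrow> real" where
  "gen_euler_pgf lam q m t = (\<Sum>j. t ^ j * gen_euler_pmf lam q m j)"

definition laguerre0 :: "nat \<Rightarrow> real \<Rightarrow> real" where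
  "laguerre0 m x = (\<Sum>k\<le>m. real (m choose k) * (- x) ^ k / fact k)"

end

theory Submission
  imports Defs
begin

lemma qpoch_inf_conv:
  fixes a q :: real
  assumes q: "0 < q" "q < 1" and a: "\<bar>a\<bar> < 1"
  shows "convergent_prod (\<lambda>k. 1 - a * q ^ k)"
proof -
  have s: "summable (\<lambda>k. \<bar>-(a * q ^ k)\<bar>)"
    using q by (auto simp: abs_mult power_abs intro!: summable_mult summable_geometric)
  have ne: "-(a * q ^ k) \<noteq> -1" for k
  proof -
    have "\<bar>a * q ^ k\<bar> \<le> \<bar>a\<bar>" using q by (auto simp: abs_mult power_le_one intro!: mult_left_le)
    then show ?thesis using a by auto
  qed
  from summable_imp_convergent_prod_real[OF s ne] show ?thesis by simp
qed

lemma qpoch_inf_lim: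
  fixes a q :: real
  assumes q: "0 < q" "q < 1" and a: "\<bar>a\<bar> < 1"
  shows "(\<lambda>n. qpoch a q n) \<longlonglongrightarrow> qpoch_inf a q"
proof -
  have "(\<lambda>n. \<Prod>i\<le>n. 1 - a * q ^ i) \<longlonglongrightarrow> qpoch_inf a q"
    unfolding qpoch_inf_def by (rule convergent_prod_LIMSEQ[OF qpoch_inf_conv[OF assms]])
  hence "(\<lambda>n. qpoch a q (Suc n)) \<longlonglongrightarrow> qpoch_inf a q"
    by (simp add: qpoch_def lessThan_Suc_atMost)
  thus ?thesis using filterlim_sequentially_Suc by blast
qed

lemma qpoch_inf_nz:
  fixes a q :: real
  assumes q: "0 < q" "q < 1" and a: "\<bar>a\<bar> < 1"
  shows "qpoch_inf a q \<noteq> 0"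
proof -
  have "1 - a * q ^ k \<noteq> 0" for k
  proof -
    have "\<bar>a * q ^ k\<bar> \<le> \<bar>a\<bar>" using q by (auto simp: abs_mult power_le_one intro!: mult_left_le)
    then show ?thesis using a by auto
  qed
  thus ?thesis unfolding qpoch_inf_def by (intro prodinf_nonzero qpoch_inf_conv assms)
qed

lemma qpoch_Suc: "qpoch a q (Suc n) = qpoch a q n * (1 - a * q ^ n)"
  by (simp add: qpoch_def)

lemma qpoch_qq_pos:
  fixes q :: real assumes q: "0 < q" "q < 1" shows "qpoch q q n > 0"
proof -
  have "1 - q * q ^ k > 0" for k
  proof -
    have "q ^ Suc k < 1" using q by (intro power_Suc_less_one) auto
    hence "q * q ^ k < 1" by simp
    thus ?thesis by simp
  qed
  thus ?thesis unfolding qpoch_def by (intro prod_pos) auto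
qed

lemma qpoch_qq_lower:
  fixes q :: real assumes q: "0 < q" "q < 1"
  shows "qpoch_inf q q > 0" "qpoch_inf q q \<le> qpoch q q n"
proof -
  have aq: "\<bar>q\<bar> < 1" using q by simp
  have L: "(\<lambda>n. qpoch q q n) \<longlonglongrightarrow> qpoch_inf q q" by (rule qpoch_inf_lim[OF q aq])
  have dec: "decseq (\<lambda>n. qpoch q q n)"
  proof (rule decseq_SucI)
    fix n
    have "0 \<le> 1 - q * q ^ n" "1 - q * q ^ n \<le> 1" using q
      by (auto simp: less_imp_le power_le_one mult_le_one zero_le_mult_iff)
    thus "qpoch q q (Suc n) \<le> qpoch q q n" unfolding qpoch_Suc
      using qpoch_qq_pos[OF q, of n] by (simp add: mult_left_le)
  qed
  show "qpoch_inf q q \<le> qpoch q q n" by (rule decseq_ge[OF dec L])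
  have "0 \<le> qpoch_inf q q"
    by (rule LIMSEQ_le_const[OF L]) (use qpoch_qq_pos[OF q] less_imp_le in blast)
  thus "qpoch_inf q q > 0" using qpoch_inf_nz[OF q aq] by simp
qed

definition eulf :: "real \<Rightarrow> real \<Rightarrow> real" where
  "eulf q w = (\<Sum>j. inverse (qpoch q q j) * w ^ j)"

lemma eul_summable:
  fixes q w :: real assumes q: "0 < q" "q < 1" and w: "\<bar>w\<bar> < 1"
  shows "summable (\<lambda>j. inverse (qpoch q q j) * w ^ j)"
proof -
  define P where "P = qpoch_inf q q"
  have P: "P > 0" "\<And>n. P \<le> qpoch q q n" using qpoch_qq_lower[OF q] by (auto simp: P_def)
  show ?thesis
  proof (rule summable_comparison_test'[where N=0])
    show "summable (\<lambda>j. inverse P * \<bar>w\<bar> ^ j)" using w by (intro summable_mult summable_geometric) simp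
    fix n :: nat
    have "inverse (qpoch q q n) \<le> inverse P" using P qpoch_qq_pos[OF q, of n]
      by (intro le_imp_inverse_le) auto
    thus "norm (inverse (qpoch q q n) * w ^ n) \<le> inverse P * \<bar>w\<bar> ^ n"
      using qpoch_qq_pos[OF q, of n] by (auto simp: abs_mult power_abs intro!: mult_right_mono)
  qed
qed

lemma eulf_func:
  fixes q w :: real assumes q: "0 < q" "q < 1" and w: "\<bar>w\<bar> < 1"
  shows "(1 - w) * eulf q w = eulf q (q * w)"
proof -
  define c where "c j = inverse (qpoch q q j)" for j
  have "q * \<bar>w\<bar> \<le> \<bar>w\<bar>" using q by (intro mult_left_le_one_le) auto
  hence qw: "\<bar>q * w\<bar> < 1" using q w by (simp add: abs_mult)
  have s1: "(\<lambda>j. c j * w ^ j) sums eulf q w"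
    using eul_summable[OF q w] unfolding eulf_def c_def by (simp add: summable_sums)
  have s2: "(\<lambda>j. c j * (q*w) ^ j) sums eulf q (q*w)"
    using eul_summable[OF q qw] unfolding eulf_def c_def by (simp add: summable_sums)
  have c0: "c 0 = 1" by (simp add: c_def qpoch_def)
  have a: "(\<lambda>j. c (Suc j) * w ^ Suc j) sums (eulf q w - 1)"
    using s1 c0 by (subst sums_Suc_iff) simp
  have b: "(\<lambda>j. w * (c j * w ^ j)) sums (w * eulf q w)" by (rule sums_mult[OF s1])
  have d: "(\<lambda>j. c (Suc j) * (q*w) ^ Suc j) sums (eulf q (q*w) - 1)"
    using s2 c0 by (subst sums_Suc_iff) simp
  have eq: "c (Suc j) * w ^ Suc j - w * (c j * w ^ j) = c (Suc j) * (q*w) ^ Suc j" for j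
  proof -
    have pos: "qpoch q q j > 0" "qpoch q q (Suc j) > 0" using qpoch_qq_pos[OF q] by auto
    have "c j = c (Suc j) * (1 - q * q ^ j)"
      using pos unfolding c_def qpoch_Suc by (simp add: field_simps)
    hence "c (Suc j) = c j + q * (q ^ j * c (Suc j))" by (simp add: algebra_simps)
    hence "c (Suc j) * w ^ Suc j = (c j + q * (q ^ j * c (Suc j))) * w ^ Suc j" by simp
    thus ?thesis by (simp add: algebra_simps power_mult_distrib)
  qed
  have "(\<lambda>j. c (Suc j) * w ^ Suc j - w * (c j * w ^ j)) sums (eulf q w - 1 - w * eulf q w)"
    by (rule sums_diff[OF a b])
  hence "(\<lambda>j. c (Suc j) * (q*w) ^ Suc j) sums (eulf q w - 1 - w * eulf q w)" by (simp only: eq)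
  from sums_unique2[OF this d] show ?thesis by (simp add: algebra_simps)
qed

lemma eulf_cont0:
  fixes q :: real assumes q: "0 < q" "q < 1"
  shows "isCont (eulf q) 0"
proof -
  have "summable (\<lambda>j. inverse (qpoch q q j) * (1/2) ^ j)"
    by (rule eul_summable[OF q]) simp
  from isCont_powser[OF this, of 0] show ?thesis unfolding eulf_def[abs_def] by simp
qed

lemma eulf0: "eulf q 0 = 1"
  unfolding eulf_def using powser_zero[of "\<lambda>j. inverse (qpoch q q j)"] by (simp add: qpoch_def)

lemma euler:
  fixes q z :: real assumes q: "0 < q" "q < 1" and z: "\<bar>z\<bar> < 1"
  shows "(\<lambda>j. z ^ j / qpoch q q j) sums (1 / qpoch_inf z q)"
proof -
  have qnz: "\<bar>q ^ n * z\<bar> < 1" for n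
  proof -
    have "q ^ n * \<bar>z\<bar> \<le> \<bar>z\<bar>" using q by (intro mult_left_le_one_le) (auto simp: power_le_one)
    thus ?thesis using q z by (simp add: abs_mult)
  qed
  have it: "eulf q z * qpoch z q n = eulf q (q ^ n * z)" for n
  proof (induction n)
    case 0 then show ?case by (simp add: qpoch_def)
  next
    case (Suc n)
    have "eulf q z * qpoch z q (Suc n) = eulf q (q ^ n * z) * (1 - q ^ n * z)"
      using Suc by (simp add: qpoch_Suc algebra_simps)
    also have "\<dots> = eulf q (q * (q ^ n * z))" using eulf_func[OF q qnz[of n]] by (simp add: algebra_simps)
    finally show ?case by (simp add: algebra_simps)
  qed
  have "(\<lambda>n. q ^ n * z) \<longlonglongrightarrow> 0 * z"
    by (intro tendsto_intros LIMSEQ_power_zero) (use q in auto)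
  hence "(\<lambda>n. eulf q (q ^ n * z)) \<longlonglongrightarrow> eulf q 0"
    using eulf_cont0[OF q] isCont_tendsto_compose by fastforce
  hence l1: "(\<lambda>n. eulf q z * qpoch z q n) \<longlonglongrightarrow> 1" using it eulf0 by simp
  have l2: "(\<lambda>n. eulf q z * qpoch z q n) \<longlonglongrightarrow> eulf q z * qpoch_inf z q"
    by (intro tendsto_intros qpoch_inf_lim q z)
  have "eulf q z * qpoch_inf z q = 1" using LIMSEQ_unique[OF l2 l1] .
  hence e: "eulf q z = 1 / qpoch_inf z q" using qpoch_inf_nz[OF q z] by (simp add: field_simps)
  have "(\<lambda>j. inverse (qpoch q q j) * z ^ j) sums eulf q z"
    using eul_summable[OF q z] unfolding eulf_def by (simp add: summable_sums)
  thus ?thesis using e by (simp add: divide_inverse mult.commute)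
qed

lemma pmf0:
  fixes q lam :: real assumes q: "0 < q" "q < 1"
  shows "gen_euler_pmf lam q 0 j = ((1-q)*lam) ^ j * qpoch_inf ((1-q)*lam) q / qpoch q q j"
proof -
  have w: "wall 0 x a q = 1" for x a by (simp add: wall_def qpoch_def)
  have n: "normN q 0 lam = 1 / qpoch_inf ((1-q)*lam) q" by (simp add: normN_def qpoch_def)
  have p: "qpoch q q j > 0" by (rule qpoch_qq_pos[OF q])
  have x_nz: "q ^ (2 * ((0::nat) choose 2)) = 1" by (simp add: binomial_eq_0)
  show ?thesis unfolding gen_euler_pmf_def adiff_def using p x_nz
    by (simp add: w n qpoch_def[of _ _ 0] power_mult_distrib)
qed

lemma part1:
  fixes q lam t :: real
  assumes "0 < q \<and> q < 1 \<and> 0 < lam \<and> lam < q ^ 0 / (1 - q) \<and> \<bar>t\<bar> \<le> 1"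
  shows "(\<lambda>j. t ^ j * gen_euler_pmf lam q 0 j) sums
              (qpoch_inf ((1 - q) * lam) q / qpoch_inf ((1 - q) * lam * t) q)"
proof -
  have q: "0 < q" "q < 1" and l: "0 < lam" "lam < 1/(1-q)" and t: "\<bar>t\<bar> \<le> 1" using assms by auto
  define x where "x = (1-q)*lam"
  have x: "0 < x" "x < 1" using q l by (auto simp: x_def field_simps)
  have xt: "\<bar>x * t\<bar> < 1"
  proof -
    have "x * \<bar>t\<bar> \<le> x" using x t by (intro mult_left_le) auto
    hence "x * \<bar>t\<bar> < 1" using x by linarith
    thus ?thesis using x by (simp add: abs_mult)
  qed
  have "(\<lambda>j. qpoch_inf x q * ((x*t) ^ j / qpoch q q j)) sums (qpoch_inf x q * (1 / qpoch_inf (x*t) q))"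
    by (intro sums_mult euler q xt)
  moreover have "qpoch_inf x q * ((x*t) ^ j / qpoch q q j) = t ^ j * gen_euler_pmf lam q 0 j" for j
    unfolding pmf0[OF q] x_def by (simp add: power_mult_distrib)
  ultimately show ?thesis unfolding x_def by simp
qed

definition qint :: "real \<Rightarrow> nat \<Rightarrow> real" where "qint q n = (\<Sum>l<n. q ^ l)"
definition qfac :: "real \<Rightarrow> nat \<Rightarrow> real" where "qfac q n = (\<Prod>i<n. qint q (Suc i))"
definition Wc :: "real \<Rightarrow> nat \<Rightarrow> nat \<Rightarrow> real \<Rightarrow> real" where
  "Wc lam n d q = (\<Sum>k\<le>n. (-1) ^ k * q ^ k * lam ^ k *
      (\<Prod>i<k. qint q (n - i) / q ^ (n - i) / (qint q (d + 1 + i) * qint q (i + 1))))"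
definition Phi :: "real \<Rightarrow> nat \<Rightarrow> real \<Rightarrow> nat \<Rightarrow> real" where
  "Phi lam m q j = q ^ (2 * (min m j choose 2)) / q ^ (m * j) * lam ^ adiff m j * qfac q (max m j)
      / (qfac q (min m j) * (qfac q (adiff m j))\<^sup>2) * (Wc lam (min m j) (adiff m j) q)\<^sup>2"

lemma one_minus_qpow: "1 - q ^ n = (1 - q) * qint q n"
  unfolding qint_def by (rule one_diff_power_eq)

lemma qint_ge1: "0 \<le> q \<Longrightarrow> 1 \<le> n \<Longrightarrow> 1 \<le> qint q n"
proof -
  assume q: "0 \<le> q" and n: "1 \<le> n"
  have "qint q n = (\<Sum>l\<in>{0} \<union> {1..<n}. q ^ l)" unfolding qint_def
    using n by (intro sum.cong) auto
  also have "\<dots> = 1 + (\<Sum>l\<in>{1..<n}. q ^ l)" by (subst sum.union_disjoint) auto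
  also have "\<dots> \<ge> 1" using q by (simp add: sum_nonneg)
  finally show ?thesis .
qed

lemma qint_le: "0 \<le> q \<Longrightarrow> q \<le> 1 \<Longrightarrow> qint q n \<le> n"
proof -
  assume "0 \<le> q" "q \<le> 1"
  hence "(\<Sum>l<n. q ^ l) \<le> (\<Sum>l<n. 1)" by (intro sum_mono) (auto simp: power_le_one)
  thus ?thesis unfolding qint_def by simp
qed

lemma qint_nonneg: "0 \<le> q \<Longrightarrow> 0 \<le> qint q n"
  unfolding qint_def by (simp add: sum_nonneg)

lemma qint_1: "qint 1 n = real n" by (simp add: qint_def)

lemma qfac_ge1: "0 \<le> q \<Longrightarrow> 1 \<le> qfac q n"
  unfolding qfac_def by (intro prod_ge_1) (auto intro: qint_ge1)

lemma qfac_1: "qfac 1 n = fact n"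
  unfolding qfac_def qint_1 by (induction n) (auto simp: fact_Suc)

lemma qpoch_qq: "qpoch q q n = (1 - q) ^ n * qfac q n"
proof -
  have "qpoch q q n = (\<Prod>i<n. (1 - q) * qint q (Suc i))"
    unfolding qpoch_def by (intro prod.cong refl) (simp add: one_minus_qpow[symmetric])
  thus ?thesis by (simp add: prod.distrib qfac_def)
qed

lemma qpoch_shift: "qpoch (q ^ d * q) q k = (1 - q) ^ k * (\<Prod>i<k. qint q (d + 1 + i))"
proof -
  have "qpoch (q ^ d * q) q k = (\<Prod>i<k. (1 - q) * qint q (d + 1 + i))"
    unfolding qpoch_def by (intro prod.cong refl) (simp add: one_minus_qpow[symmetric] power_add)
  thus ?thesis by (simp add: prod.distrib)
qed

lemma qpoch_inv:
  fixes q :: real assumes q: "0 < q" and k: "k \<le> n"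
  shows "qpoch (inverse (q ^ n)) q k = (-1) ^ k * (1 - q) ^ k * (\<Prod>i<k. qint q (n - i) / q ^ (n - i))"
proof -
  have "qpoch (inverse (q ^ n)) q k = (\<Prod>i<k. (-1) * (1 - q) * (qint q (n - i) / q ^ (n - i)))"
    unfolding qpoch_def
  proof (intro prod.cong refl)
    fix i assume "i \<in> {..<k}"
    hence i: "i + (n - i) = n" using k by auto
    have "q ^ n = q ^ i * q ^ (n - i)" by (subst i[symmetric], subst power_add) simp
    hence "1 - inverse (q ^ n) * q ^ i = 1 - 1 / q ^ (n - i)" using q by (simp add: field_simps)
    also have "\<dots> = - (1 - q ^ (n - i)) / q ^ (n - i)" using q by (simp add: field_simps)
    finally show "1 - inverse (q ^ n) * q ^ i = (-1) * (1 - q) * (qint q (n - i) / q ^ (n - i))"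
      by (simp add: one_minus_qpow algebra_simps)
  qed
  thus ?thesis by (simp only: prod.distrib prod_constant card_lessThan)
qed

lemma wall_Wc:
  fixes q lam :: real assumes q: "0 < q" "q < 1"
  shows "wall n ((1 - q) * lam) (q ^ d) q = Wc lam n d q"
  unfolding wall_def Wc_def
proof (intro sum.cong refl)
  fix k assume "k \<in> {..n}"
  hence k: "k \<le> n" by simp
  define A where "A = (\<Prod>i<k. qint q (n - i) / q ^ (n - i))"
  define B where "B = (\<Prod>i<k. qint q (d + 1 + i))"
  define C where "C = (\<Prod>i<k. qint q (i + 1))"
  have C': "qpoch q q k = (1 - q) ^ k * C" unfolding qpoch_qq qfac_def C_def by simp
  have Bp: "B \<noteq> 0" unfolding B_def using q by (intro prod_pos[THEN less_imp_neq, symmetric] ) (auto intro: less_le_trans[OF _ qint_ge1])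
  have Cp: "C \<noteq> 0" unfolding C_def using q by (intro prod_pos[THEN less_imp_neq, symmetric] ) (auto intro: less_le_trans[OF _ qint_ge1])
  have qq: "(1 - q) ^ k \<noteq> 0" using q by simp
  have "qpoch (inverse (q ^ n)) q k / qpoch (q ^ d * q) q k * (q * ((1 - q) * lam)) ^ k / qpoch q q k
      = (-1) ^ k * (1 - q) ^ k * A / ((1 - q) ^ k * B) * (q ^ k * (1 - q) ^ k * lam ^ k) / ((1 - q) ^ k * C)"
    unfolding qpoch_inv[OF q(1) k] qpoch_shift C' A_def B_def by (simp add: power_mult_distrib)
  also have "\<dots> = (-1) ^ k * q ^ k * lam ^ k * (A / (B * C))"
    using Bp Cp qq q by (simp add: field_simps)
  also have "A / (B * C) = (\<Prod>i<k. qint q (n - i) / q ^ (n - i) / (qint q (d + 1 + i) * qint q (i + 1)))"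
    unfolding A_def B_def C_def by (simp add: prod_dividef prod.distrib)
  finally show "qpoch (inverse (q ^ n)) q k / qpoch (q ^ d * q) q k * (q * ((1 - q) * lam)) ^ k / qpoch q q k
      = (-1) ^ k * q ^ k * lam ^ k *
      (\<Prod>i<k. qint q (n - i) / q ^ (n - i) / (qint q (d + 1 + i) * qint q (i + 1)))" .
qed

lemma qfac_pos: "0 \<le> q \<Longrightarrow> qfac q n > 0"
  using qfac_ge1[of q n] by linarith

lemma pmf_Phi:
  fixes q lam :: real assumes q: "0 < q" "q < 1"
  shows "gen_euler_pmf lam q m j = inverse (normN q m lam) * Phi lam m q j"
proof -
  define N where "N = normN q m lam"
  have W: "wall n ((1 - q) * lam) (q ^ d) q = Wc lam n d q" for n d by (rule wall_Wc[OF q])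
  have F: "\<And>n. qfac q n \<noteq> 0" using qfac_pos[of q] q by (metis less_imp_le less_irrefl)
  have q1: "1 - q \<noteq> 0" "q \<noteq> 0" using q by auto
  show ?thesis
  proof (cases "N = 0")
    case True
    thus ?thesis unfolding gen_euler_pmf_def N_def by simp
  next
    case N: False
    show ?thesis
    proof (cases "j \<le> m")
      case True
      then obtain d where m: "m = j + d" using le_Suc_ex by blast
      have e: "min m j = j" "max m j = m" "adiff m j = d" using m by (auto simp: adiff_def)
      show ?thesis unfolding gen_euler_pmf_def Phi_def e W N_def[symmetric]
        using N F q1 unfolding qpoch_qq m by (simp add: field_simps power_add power2_eq_square)
    next
      case False
      then obtain d where m: "j = m + d" using le_Suc_ex[of m j] by auto
      have e: "min m j = m" "max m j = j" "adiff m j = d" using m by (auto simp: adiff_def)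
      show ?thesis unfolding gen_euler_pmf_def Phi_def e W N_def[symmetric]
        using N F q1 unfolding qpoch_qq m by (simp add: field_simps power_add power2_eq_square)
    qed
  qed
qed

lemma qpinf_bounds:
  fixes a q :: real assumes q: "0 < q" "q < 1" and a: "0 \<le> a" "a \<le> 1/2"
  shows "exp (- (a / (1 - q)) - 2 * (a^2 / (1 - q^2))) \<le> qpoch_inf a q"
        "qpoch_inf a q \<le> exp (- (a / (1 - q)))"
proof -
  have aa: "\<bar>a\<bar> < 1" using a by simp
  have L: "(\<lambda>n. qpoch a q n) \<longlonglongrightarrow> qpoch_inf a q" by (rule qpoch_inf_lim[OF q aa])
  have z: "0 \<le> a * q ^ k" "a * q ^ k \<le> 1/2" for k
  proof -
    show "0 \<le> a * q ^ k" using a q by simp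
    have "a * q ^ k \<le> a" using a q by (intro mult_left_le) (auto simp: power_le_one)
    thus "a * q ^ k \<le> 1/2" using a by simp
  qed
  have s1: "(\<lambda>k. a * q ^ k) sums (a / (1 - q))"
    using sums_mult[OF geometric_sums[of q], of a] q by simp
  have q2: "norm (q^2) < 1" using q by (simp add: power_less_one_iff abs_less_iff)
  have s2: "(\<lambda>k. (a * q ^ k)^2) sums (a^2 / (1 - q^2))"
    using sums_mult[OF geometric_sums[OF q2], of "a^2"] by (simp add: power_mult_distrib power_mult[symmetric] mult.commute)
  have up: "qpoch a q n \<le> exp (- (\<Sum>k<n. a * q ^ k))" for n
  proof -
    have "qpoch a q n \<le> (\<Prod>k<n. exp (- (a * q ^ k)))"
      unfolding qpoch_def
    proof (intro prod_mono conjI)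
      fix k
      show "0 \<le> 1 - a * q ^ k" using z[of k] by linarith
      show "1 - a * q ^ k \<le> exp (- (a * q ^ k))" using exp_ge_add_one_self[of "- (a * q ^ k)"] by simp
    qed
    thus ?thesis by (simp add: exp_sum[symmetric] sum_negf)
  qed
  have "(\<lambda>n. exp (- (\<Sum>k<n. a * q ^ k))) \<longlonglongrightarrow> exp (- (a / (1 - q)))"
    using s1 unfolding sums_def by (intro tendsto_intros)
  from LIMSEQ_le[OF L this] up show "qpoch_inf a q \<le> exp (- (a / (1 - q)))" by auto
  have lo: "exp (- (a / (1 - q)) - 2 * (a^2 / (1 - q^2))) \<le> qpoch a q n" for n
  proof -
    have "(\<Sum>k<n. a * q ^ k) \<le> a / (1 - q)"
      using sum_le_suminf[OF sums_summable[OF s1], of "{..<n}"] sums_unique[OF s1] z by auto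
    moreover have "(\<Sum>k<n. (a * q ^ k)^2) \<le> a^2 / (1 - q^2)"
      using sum_le_suminf[OF sums_summable[OF s2], of "{..<n}"] sums_unique[OF s2] by auto
    ultimately have "exp (- (a / (1 - q)) - 2 * (a^2 / (1 - q^2))) \<le> exp (\<Sum>k<n. - (a * q ^ k) - 2 * (a * q ^ k)^2)"
      by (simp add: sum.distrib sum_negf sum_distrib_left[symmetric] sum_subtractf)
    also have "\<dots> = (\<Prod>k<n. exp (- (a * q ^ k) - 2 * (a * q ^ k)^2))" by (simp add: exp_sum)
    also have "\<dots> \<le> qpoch a q n" unfolding qpoch_def
    proof (intro prod_mono conjI)
      fix k
      have "- (a * q ^ k) - 2 * (a * q ^ k)^2 \<le> ln (1 - a * q ^ k)"
        by (rule ln_one_minus_pos_lower_bound[OF z])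
      moreover have "1 - a * q ^ k > 0" using z[of k] by linarith
      ultimately show "exp (- (a * q ^ k) - 2 * (a * q ^ k)^2) \<le> 1 - a * q ^ k"
        by (metis exp_le_cancel_iff exp_ln)
    qed auto
    finally show ?thesis .
  qed
  show "exp (- (a / (1 - q)) - 2 * (a^2 / (1 - q^2))) \<le> qpoch_inf a q"
    by (rule LIMSEQ_le_const[OF L]) (use lo in blast)
qed

lemma ev_q01: "eventually (\<lambda>q::real. 0 < q \<and> q < 1) (at_left 1)"
  using eventually_at_left_real[of 0 "1::real"] by (auto elim: eventually_mono)

lemma qpinf_lim:
  fixes lam :: real assumes lam: "0 < lam"
  shows "((\<lambda>q. qpoch_inf (inverse (q ^ m) * (1 - q) * lam) q) \<longlongrightarrow> exp (- lam)) (at_left 1)"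
proof -
  define a where "a q = inverse (q ^ m) * (1 - q) * lam" for q :: real
  have "(a \<longlongrightarrow> inverse (1 ^ m) * (1 - 1) * lam) (at_left 1)"
    unfolding a_def by (intro tendsto_intros) auto
  hence "(a \<longlongrightarrow> 0) (at_left 1)" by simp
  hence ev1: "eventually (\<lambda>q. a q < 1/2) (at_left 1)" by (rule order_tendstoD) simp
  have ev: "eventually (\<lambda>q. 0 < q \<and> q < 1 \<and> a q \<le> 1/2) (at_left 1)"
    using ev1 ev_q01 by eventually_elim auto
  have e1: "a q / (1 - q) = lam / q ^ m" if "0 < q" "q < 1" for q
    using that by (simp add: a_def field_simps)
  have e2: "a q ^ 2 / (1 - q ^ 2) = (lam / q ^ m)^2 * (1 - q) / (1 + q)" if "0 < q" "q < 1" for q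
  proof -
    have ab: "a q = (lam / q ^ m) * (1 - q)" using that by (simp add: a_def field_simps)
    have g: "(b * (1 - x))^2 / (1 - x^2) = b^2 * (1 - x) / (1 + x)" if "0 < x" "x < 1" for b x :: real
    proof -
      have n1: "1 - x^2 \<noteq> 0" using that by (simp add: power2_eq_square) (metis less_irrefl mult_less_cancel_right1 mult_left_le_one_le less_imp_le not_le)
      have n2: "1 + x \<noteq> 0" using that by simp
      have "(b * (1 - x))^2 * (1 + x) = b^2 * (1 - x) * (1 - x^2)" by (simp add: algebra_simps power2_eq_square)
      thus ?thesis using n1 n2 by (simp add: frac_eq_eq)
    qed
    show ?thesis unfolding ab by (rule g[OF that])
  qed
  have "((\<lambda>q. qpoch_inf (a q) q) \<longlongrightarrow> exp (- lam)) (at_left 1)"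
  proof (rule tendsto_sandwich)
    show "eventually (\<lambda>q. exp (- (lam / q ^ m) - 2 * ((lam / q ^ m)^2 * (1 - q) / (1 + q))) \<le> qpoch_inf (a q) q) (at_left 1)"
      using ev
    proof eventually_elim
      case (elim q)
      have "0 \<le> a q" using elim lam by (simp add: a_def)
      from qpinf_bounds(1)[of q "a q"] this elim show ?case by (simp add: e1 e2)
    qed
    show "eventually (\<lambda>q. qpoch_inf (a q) q \<le> exp (- (lam / q ^ m))) (at_left 1)"
      using ev
    proof eventually_elim
      case (elim q)
      have "0 \<le> a q" using elim lam by (simp add: a_def)
      from qpinf_bounds(2)[of q "a q"] this elim show ?case by (simp add: e1 e2)
    qed
    have "((\<lambda>q. exp (- (lam / q ^ m) - 2 * ((lam / q ^ m)^2 * (1 - q) / (1 + q)))) \<longlongrightarrow>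
       exp (- (lam / 1 ^ m) - 2 * ((lam / 1 ^ m)^2 * (1 - 1) / (1 + 1)))) (at_left 1)"
      by (intro tendsto_intros) auto
    thus "((\<lambda>q. exp (- (lam / q ^ m) - 2 * ((lam / q ^ m)^2 * (1 - q) / (1 + q)))) \<longlongrightarrow> exp (- lam)) (at_left 1)"
      by simp
    have "((\<lambda>q. exp (- (lam / q ^ m))) \<longlongrightarrow> exp (- (lam / 1 ^ m))) (at_left 1)"
      by (intro tendsto_intros) auto
    thus "((\<lambda>q. exp (- (lam / q ^ m))) \<longlongrightarrow> exp (- lam)) (at_left 1)" by simp
  qed
  thus ?thesis by (simp add: a_def)
qed

lemma invN_lim:
  fixes lam :: real assumes lam: "0 < lam"
  shows "((\<lambda>q. inverse (normN q m lam)) \<longlongrightarrow> exp (- lam)) (at_left 1)"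
proof -
  have f: "((\<lambda>q. qpoch ((q / q ^ m) * (1 - q) * lam) q m) \<longlongrightarrow> qpoch ((1 / 1 ^ m) * (1 - 1) * lam) 1 m) (at_left 1)"
    unfolding qpoch_def by (intro tendsto_intros) auto
  have f1: "qpoch ((1 / 1 ^ m) * (1 - 1) * lam) 1 m = 1" by (simp add: qpoch_def)
  have "((\<lambda>q. q ^ m * qpoch_inf (inverse (q ^ m) * (1 - q) * lam) q / qpoch ((q / q ^ m) * (1 - q) * lam) q m)
     \<longlongrightarrow> 1 ^ m * exp (- lam) / 1) (at_left 1)"
    using f f1 by (intro tendsto_intros qpinf_lim lam) auto
  thus ?thesis unfolding normN_def by simp
qed

lemma Phi_cont: "((\<lambda>q. Phi lam m q j) \<longlongrightarrow> Phi lam m 1 j) (at_left 1)"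
proof -
  have "((\<lambda>q. Phi lam m q j) \<longlongrightarrow> Phi lam m 1 j) (at 1)"
    unfolding Phi_def Wc_def qfac_def qint_def
    by (intro tendsto_intros) (auto simp: prod_zero_iff)
  thus ?thesis by (rule tendsto_within_subset) simp
qed

lemma pmf_lim:
  fixes lam :: real assumes lam: "0 < lam"
  shows "((\<lambda>q. gen_euler_pmf lam q m j) \<longlongrightarrow> exp (- lam) * Phi lam m 1 j) (at_left 1)"
proof -
  have "((\<lambda>q. inverse (normN q m lam) * Phi lam m q j) \<longlongrightarrow> exp (- lam) * Phi lam m 1 j) (at_left 1)"
    by (intro tendsto_intros invN_lim lam Phi_cont)
  moreover have "eventually (\<lambda>q. inverse (normN q m lam) * Phi lam m q j = gen_euler_pmf lam q m j) (at_left 1)"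
    using ev_q01 by eventually_elim (simp add: pmf_Phi)
  ultimately show ?thesis by (rule Lim_transform_eventually)
qed

lemma lemB:
  fixes y :: real
  shows "(\<lambda>i. y ^ i * real (i choose r) / fact i) sums (exp y * y ^ r / fact r)"
proof -
  have e: "(\<lambda>n. y ^ n / fact n) sums exp y" using exp_converges[of y] by (simp add: divide_inverse mult.commute)
  have "(\<lambda>n. y ^ r / fact r * (y ^ n / fact n)) sums (y ^ r / fact r * exp y)" by (rule sums_mult[OF e])
  moreover have "y ^ (n + r) * real ((n + r) choose r) / fact (n + r) = y ^ r / fact r * (y ^ n / fact n)" for n
  proof -
    have "real ((n + r) choose r) = fact (n + r) / (fact r * fact n)" by (subst binomial_fact) auto
    thus ?thesis by (simp add: power_add field_simps)
  qed
  ultimately have "(\<lambda>n. y ^ (n + r) * real ((n + r) choose r) / fact (n + r)) sums (exp y * y ^ r / fact r)"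
    by (simp add: mult.commute)
  thus ?thesis by (subst (asm) sums_zero_iff_shift) (auto simp: binomial_eq_0)
qed

lemma lemA:
  fixes y :: real
  shows "(\<lambda>j. y ^ j * real (j choose c) * real (j choose e) / fact j) sums
     (exp y * (\<Sum>l\<le>e. real (c choose l) * y ^ (c + e - l) / (fact c * fact (e - l))))"
proof -
  have "(\<lambda>i. \<Sum>l\<le>e. real (c choose l) * y ^ c / fact c * (y ^ i * real (i choose (e - l)) / fact i)) sums
        (\<Sum>l\<le>e. real (c choose l) * y ^ c / fact c * (exp y * y ^ (e - l) / fact (e - l)))"
    by (intro sums_sum sums_mult lemB)
  moreover have "(\<Sum>l\<le>e. real (c choose l) * y ^ c / fact c * (exp y * y ^ (e - l) / fact (e - l)))
     = exp y * (\<Sum>l\<le>e. real (c choose l) * y ^ (c + e - l) / (fact c * fact (e - l)))"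
    unfolding sum_distrib_left
  proof (intro sum.cong refl)
    fix l assume "l \<in> {..e}"
    hence "c + e - l = c + (e - l)" by auto
    thus "real (c choose l) * y ^ c / fact c * (exp y * y ^ (e - l) / fact (e - l)) =
         exp y * (real (c choose l) * y ^ (c + e - l) / (fact c * fact (e - l)))"
      by (simp add: power_add)
  qed
  moreover have "(\<Sum>l\<le>e. real (c choose l) * y ^ c / fact c * (y ^ i * real (i choose (e - l)) / fact i))
      = y ^ (i + c) * real ((i + c) choose c) * real ((i + c) choose e) / fact (i + c)" for i
  proof -
    have v: "real ((c + i) choose e) = (\<Sum>l\<le>e. real (c choose l) * real (i choose (e - l)))"
      by (subst vandermonde[symmetric]) simp
    have b: "real ((i + c) choose c) = fact (i + c) / (fact c * fact i)" by (subst binomial_fact) auto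
    have "(\<Sum>l\<le>e. real (c choose l) * y ^ c / fact c * (y ^ i * real (i choose (e - l)) / fact i))
        = y ^ c / fact c * y ^ i / fact i * (\<Sum>l\<le>e. real (c choose l) * real (i choose (e - l)))"
      by (simp add: sum_distrib_left mult_ac)
    also have "\<dots> = y ^ (i + c) * real ((i + c) choose c) * real ((i + c) choose e) / fact (i + c)"
      unfolding v[symmetric] b by (simp add: power_add field_simps add.commute)
    finally show ?thesis .
  qed
  ultimately have "(\<lambda>i. y ^ (i + c) * real ((i + c) choose c) * real ((i + c) choose e) / fact (i + c)) sums
     (exp y * (\<Sum>l\<le>e. real (c choose l) * y ^ (c + e - l) / (fact c * fact (e - l))))"
    by simp
  thus ?thesis by (subst (asm) sums_zero_iff_shift) (auto simp: binomial_eq_0)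
qed

definition phi :: "real \<Rightarrow> nat \<Rightarrow> nat \<Rightarrow> real" where
  "phi lam m j = (\<Sum>a\<le>m. real (j choose (m - a)) * (-lam) ^ a / fact a)"

definition GG :: "real \<Rightarrow> real \<Rightarrow> nat \<Rightarrow> nat \<Rightarrow> nat \<Rightarrow> nat \<Rightarrow> real" where
  "GG lam y m a b k = (if a \<le> k \<and> b \<le> k then (-lam) ^ a * (-lam) ^ b * y ^ (m + k - a - b) /
      (fact (m - k) * fact a * fact (k - a) * fact b * fact (k - b)) else 0)"

lemma sum_ext_if:
  fixes f :: "nat \<Rightarrow> real"
  assumes "n \<le> N" shows "(\<Sum>a\<le>N. if a \<le> n then f a else 0) = (\<Sum>a\<le>n. f a)"
proof -
  have "(\<Sum>a\<le>N. if a \<le> n then f a else 0) = (\<Sum>a\<in>{a\<in>{..N}. a \<le> n}. f a)"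
    using sum.inter_filter[of "{..N}" f "\<lambda>a. a \<le> n"] by simp
  also have "{a\<in>{..N}. a \<le> n} = {..n}" using assms by auto
  finally show ?thesis .
qed

lemma L1:
  fixes lam y :: real assumes a: "a \<le> m" and b: "b \<le> m"
  shows "(-lam) ^ a * (-lam) ^ b / (fact a * fact b) *
     (\<Sum>l\<le>m - b. real ((m - a) choose l) * y ^ ((m - a) + (m - b) - l) / (fact (m - a) * fact (m - b - l)))
     = (\<Sum>k\<le>m. GG lam y m a b k)"
proof -
  define h where "h l = real ((m - a) choose l) * y ^ ((m - a) + (m - b) - l) / (fact (m - a) * fact (m - b - l))" for l
  define c where "c = (-lam) ^ a * (-lam) ^ b / (fact a * fact b)"
  have "(\<Sum>l\<le>m - b. h l) = (\<Sum>k\<in>{b..m}. h (m - k))"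
    by (rule sum.reindex_bij_witness[where i="\<lambda>k. m - k" and j="\<lambda>l. m - l"]) (use b in auto)
  also have "\<dots> = (\<Sum>k\<in>{k\<in>{..m}. b \<le> k}. h (m - k))" by (intro sum.cong) auto
  also have "\<dots> = (\<Sum>k\<le>m. if b \<le> k then h (m - k) else 0)"
    using sum.inter_filter[of "{..m}" "\<lambda>k. h (m - k)" "\<lambda>k. b \<le> k"] by simp
  finally have s: "(\<Sum>l\<le>m - b. h l) = (\<Sum>k\<le>m. if b \<le> k then h (m - k) else 0)" .
  have "c * (\<Sum>l\<le>m - b. h l) = (\<Sum>k\<le>m. GG lam y m a b k)"
    unfolding s sum_distrib_left
  proof (intro sum.cong refl)
    fix k assume k: "k \<in> {..m}"
    show "c * (if b \<le> k then h (m - k) else 0) = GG lam y m a b k"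
    proof (cases "b \<le> k")
      case False thus ?thesis by (simp add: GG_def)
    next
      case bk: True
      show ?thesis
      proof (cases "a \<le> k")
        case False
        hence "(m - a) choose (m - k) = 0" using k a by (intro binomial_eq_0) auto
        thus ?thesis using False by (simp add: GG_def h_def)
      next
        case ak: True
        obtain u where u: "k = a + u" using ak le_Suc_ex by blast
        obtain w where w: "k = b + w" using bk le_Suc_ex by blast
        obtain v where v: "m = k + v" using k le_Suc_ex by auto
        have e1: "m - a = u + v" "m - b = w + v" "m - k = v" "m - b - (m - k) = w"
          "(m - a) + (m - b) - (m - k) = u + v + w" "m + k - a - b = u + v + w" "k - a = u" "k - b = w"
          using u v w by auto
        have bf: "real ((u + v) choose v) = fact (u + v) / (fact v * fact u)"
          by (subst binomial_fact) auto
        show ?thesis using ak bk unfolding GG_def h_def c_def e1 bf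
          by (simp add: field_simps)
      qed
    qed
  qed
  thus ?thesis unfolding c_def h_def .
qed

lemma L2:
  fixes lam y :: real assumes k: "k \<le> m"
  shows "real (m choose k) * y ^ (m - k) * (y - lam) ^ (2 * k) / fact k / fact m
     = (\<Sum>a\<le>m. \<Sum>b\<le>m. GG lam y m a b k)"
proof -
  have bin: "(y - lam) ^ k = (\<Sum>a\<le>k. real (k choose a) * (-lam) ^ a * y ^ (k - a))"
    using binomial_ring[of "-lam" y k] by simp
  have "(y - lam) ^ (2 * k) = (\<Sum>a\<le>k. \<Sum>b\<le>k. (real (k choose a) * (-lam) ^ a * y ^ (k - a)) * (real (k choose b) * (-lam) ^ b * y ^ (k - b)))"
  proof -
    have "(y - lam) ^ (2 * k) = (y - lam) ^ k * (y - lam) ^ k" by (simp add: mult_2 power_add)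
    thus ?thesis unfolding bin by (simp only: sum_product)
  qed
  hence "real (m choose k) * y ^ (m - k) * (y - lam) ^ (2 * k) / fact k / fact m =
    (\<Sum>a\<le>k. \<Sum>b\<le>k. real (m choose k) * y ^ (m - k) / fact k / fact m * ((real (k choose a) * (-lam) ^ a * y ^ (k - a)) * (real (k choose b) * (-lam) ^ b * y ^ (k - b))))"
    by (simp add: sum_distrib_left sum_divide_distrib mult_ac)
  also have "\<dots> = (\<Sum>a\<le>k. \<Sum>b\<le>k. GG lam y m a b k)"
  proof (intro sum.cong refl)
    fix a b assume a: "a \<in> {..k}" and b: "b \<in> {..k}"
    obtain u where u: "k = a + u" using a le_Suc_ex by auto
    obtain w where w: "k = b + w" using b le_Suc_ex by auto
    obtain v where v: "m = k + v" using k le_Suc_ex by auto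
    have e1: "m - k = v" "m + k - a - b = u + v + w" "k - a = u" "k - b = w" using u v w by auto
    have b1: "real (m choose k) = fact m / (fact k * fact v)" using e1 k by (subst binomial_fact) auto
    have b2: "real (k choose a) = fact k / (fact a * fact u)" using e1 a by (subst binomial_fact) auto
    have b3: "real (k choose b) = fact k / (fact b * fact w)" using e1 b by (subst binomial_fact) auto
    have pw: "y ^ (u + v + w) = y ^ v * y ^ u * y ^ w" by (simp add: power_add mult_ac)
    show "real (m choose k) * y ^ (m - k) / fact k / fact m * ((real (k choose a) * (-lam) ^ a * y ^ (k - a)) * (real (k choose b) * (-lam) ^ b * y ^ (k - b)))
        = GG lam y m a b k"
      using a b unfolding GG_def e1 b1 b2 b3 pw by (simp add: field_simps)
  qed
  also have "\<dots> = (\<Sum>a\<le>m. \<Sum>b\<le>m. GG lam y m a b k)"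
  proof -
    have "(\<Sum>a\<le>m. \<Sum>b\<le>m. GG lam y m a b k) = (\<Sum>a\<le>m. if a \<le> k then (\<Sum>b\<le>k. GG lam y m a b k) else 0)"
    proof (intro sum.cong refl)
      fix a assume "a \<in> {..m}"
      have "(\<Sum>b\<le>m. GG lam y m a b k) = (\<Sum>b\<le>m. if b \<le> k then GG lam y m a b k else 0)"
        by (intro sum.cong refl) (simp add: GG_def)
      also have "\<dots> = (\<Sum>b\<le>k. GG lam y m a b k)" by (rule sum_ext_if[OF k])
      finally show "(\<Sum>b\<le>m. GG lam y m a b k) = (if a \<le> k then (\<Sum>b\<le>k. GG lam y m a b k) else 0)"
        by (auto simp: GG_def)
    qed
    also have "\<dots> = (\<Sum>a\<le>k. \<Sum>b\<le>k. GG lam y m a b k)" by (rule sum_ext_if[OF k])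
    finally show ?thesis by simp
  qed
  finally show ?thesis .
qed

lemma star:
  fixes lam y :: real
  shows "(\<lambda>j. y ^ j * (phi lam m j)^2 / fact j) sums
     (exp y / fact m * (\<Sum>k\<le>m. real (m choose k) * y ^ (m - k) * (y - lam) ^ (2 * k) / fact k))"
proof -
  have "(\<lambda>j. \<Sum>a\<le>m. \<Sum>b\<le>m. (-lam) ^ a * (-lam) ^ b / (fact a * fact b) *
          (y ^ j * real (j choose (m - a)) * real (j choose (m - b)) / fact j)) sums
        (\<Sum>a\<le>m. \<Sum>b\<le>m. (-lam) ^ a * (-lam) ^ b / (fact a * fact b) *
          (exp y * (\<Sum>l\<le>m - b. real ((m - a) choose l) * y ^ ((m - a) + (m - b) - l) / (fact (m - a) * fact (m - b - l)))))"
    by (intro sums_sum sums_mult lemA)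
  moreover have "(\<Sum>a\<le>m. \<Sum>b\<le>m. (-lam) ^ a * (-lam) ^ b / (fact a * fact b) *
          (y ^ j * real (j choose (m - a)) * real (j choose (m - b)) / fact j)) = y ^ j * (phi lam m j)^2 / fact j" for j
  proof -
    have sq: "(phi lam m j)^2 = (\<Sum>a\<le>m. \<Sum>b\<le>m. (real (j choose (m - a)) * (-lam) ^ a / fact a) * (real (j choose (m - b)) * (-lam) ^ b / fact b))"
      unfolding phi_def power2_eq_square by (rule sum_product)
    have "y ^ j * (phi lam m j)^2 / fact j = y ^ j / fact j * (phi lam m j)^2" by simp
    also have "\<dots> = (\<Sum>a\<le>m. \<Sum>b\<le>m. y ^ j / fact j * ((real (j choose (m - a)) * (-lam) ^ a / fact a) * (real (j choose (m - b)) * (-lam) ^ b / fact b)))"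
      unfolding sq sum_distrib_left ..
    finally have E: "y ^ j * (phi lam m j)^2 / fact j = (\<Sum>a\<le>m. \<Sum>b\<le>m. y ^ j / fact j * ((real (j choose (m - a)) * (-lam) ^ a / fact a) * (real (j choose (m - b)) * (-lam) ^ b / fact b)))" .
    show ?thesis unfolding E by (intro sum.cong refl) (simp add: mult_ac)
  qed
  moreover have "(\<Sum>a\<le>m. \<Sum>b\<le>m. (-lam) ^ a * (-lam) ^ b / (fact a * fact b) *
          (exp y * (\<Sum>l\<le>m - b. real ((m - a) choose l) * y ^ ((m - a) + (m - b) - l) / (fact (m - a) * fact (m - b - l)))))
      = exp y / fact m * (\<Sum>k\<le>m. real (m choose k) * y ^ (m - k) * (y - lam) ^ (2 * k) / fact k)"
  proof -
    have "(\<Sum>a\<le>m. \<Sum>b\<le>m. (-lam) ^ a * (-lam) ^ b / (fact a * fact b) *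
          (exp y * (\<Sum>l\<le>m - b. real ((m - a) choose l) * y ^ ((m - a) + (m - b) - l) / (fact (m - a) * fact (m - b - l)))))
       = (\<Sum>a\<le>m. \<Sum>b\<le>m. exp y * (\<Sum>k\<le>m. GG lam y m a b k))"
    proof (intro sum.cong refl)
      fix a b assume "a \<in> {..m}" "b \<in> {..m}"
      hence ab: "a \<le> m" "b \<le> m" by auto
      show "(-lam) ^ a * (-lam) ^ b / (fact a * fact b) *
          (exp y * (\<Sum>l\<le>m - b. real ((m - a) choose l) * y ^ ((m - a) + (m - b) - l) / (fact (m - a) * fact (m - b - l))))
         = exp y * (\<Sum>k\<le>m. GG lam y m a b k)"
        by (subst mult.left_commute) (simp only: L1[OF ab])
    qed
    also have "\<dots> = exp y * (\<Sum>a\<le>m. \<Sum>b\<le>m. \<Sum>k\<le>m. GG lam y m a b k)"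
      by (simp add: sum_distrib_left)
    also have "(\<Sum>a\<le>m. \<Sum>b\<le>m. \<Sum>k\<le>m. GG lam y m a b k) = (\<Sum>k\<le>m. \<Sum>a\<le>m. \<Sum>b\<le>m. GG lam y m a b k)"
    proof -
      have "(\<Sum>a\<le>m. \<Sum>b\<le>m. \<Sum>k\<le>m. GG lam y m a b k) = (\<Sum>a\<le>m. \<Sum>k\<le>m. \<Sum>b\<le>m. GG lam y m a b k)"
        by (rule sum.cong[OF refl], rule sum.swap)
      also have "\<dots> = (\<Sum>k\<le>m. \<Sum>a\<le>m. \<Sum>b\<le>m. GG lam y m a b k)" by (rule sum.swap)
      finally show ?thesis .
    qed
    also have "\<dots> = (\<Sum>k\<le>m. real (m choose k) * y ^ (m - k) * (y - lam) ^ (2 * k) / fact k / fact m)"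
      by (intro sum.cong refl) (simp add: L2[symmetric])
    also have "\<dots> = (\<Sum>k\<le>m. real (m choose k) * y ^ (m - k) * (y - lam) ^ (2 * k) / fact k) / fact m"
      by (rule sum_divide_distrib[symmetric])
    finally show ?thesis by simp
  qed
  ultimately show ?thesis by simp
qed

lemma prodA: "k \<le> n \<Longrightarrow> (\<Prod>i<k. real (n - i)) = fact n / fact (n - k)"
proof (induction k)
  case 0 then show ?case by simp
next
  case (Suc k)
  hence "k < n" by simp
  then obtain r where r: "n - k = Suc r" by (metis Suc_diff_Suc)
  have r2: "n - Suc k = r" using r by simp
  have "(\<Prod>i<Suc k. real (n - i)) = fact n / fact (n - k) * real (n - k)" using Suc by simp
  also have "\<dots> = fact n / (real (Suc r) * fact r) * real (Suc r)" unfolding r fact_Suc by simp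
  also have "\<dots> = fact n / fact (n - Suc k)" unfolding r2 by (simp del: of_nat_Suc)
  finally show ?case .
qed

lemma prodB: "(\<Prod>i<k. real (d + 1 + i)) = fact (d + k) / fact d"
proof (induction k)
  case 0 then show ?case by simp
next
  case (Suc k)
  have f: "fact (d + Suc k) = real (d + 1 + k) * fact (d + k)"
    using fact_Suc[of "d + k"] by simp
  have "(\<Prod>i<Suc k. real (d + 1 + i)) = fact (d + k) / fact d * real (d + 1 + k)" using Suc by simp
  also have "\<dots> = fact (d + Suc k) / fact d" unfolding f by simp
  finally show ?case .
qed

lemma prodC: "(\<Prod>i<k. real (i + 1)) = fact k"
  by (induction k) (simp_all add: fact_Suc field_simps)

lemma Wc1: "Wc lam n d 1 = (\<Sum>k\<le>n. (-lam) ^ k * (fact n * fact d / (fact (n - k) * fact (d + k) * fact k)))"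
  unfolding Wc_def
proof (intro sum.cong refl)
  fix k assume "k \<in> {..n}"
  hence k: "k \<le> n" by simp
  have "(\<Prod>i<k. qint 1 (n - i) / 1 ^ (n - i) / (qint 1 (d + 1 + i) * qint 1 (i + 1)))
      = (\<Prod>i<k. real (n - i)) / ((\<Prod>i<k. real (d + 1 + i)) * (\<Prod>i<k. real (i + 1)))"
    by (simp add: qint_1 prod_dividef prod.distrib)
  also have "\<dots> = fact n * fact d / (fact (n - k) * fact (d + k) * fact k)"
    unfolding prodA[OF k] prodB prodC by (simp add: field_simps)
  finally show "(-1) ^ k * 1 ^ k * lam ^ k * (\<Prod>i<k. qint 1 (n - i) / 1 ^ (n - i) / (qint 1 (d + 1 + i) * qint 1 (i + 1)))
     = (-lam) ^ k * (fact n * fact d / (fact (n - k) * fact (d + k) * fact k))"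
    by (simp add: power_minus')
qed

lemma Phi1:
  "Phi lam m 1 j * lam ^ m = fact m * lam ^ j * (phi lam m j)^2 / fact j"
proof (cases "m \<le> j")
  case True
  then obtain d where j: "j = m + d" using le_Suc_ex by blast
  have e: "min m j = m" "max m j = j" "adiff m j = d" using j by (auto simp: adiff_def)
  have W: "Wc lam m d 1 = fact m * fact d / fact j * phi lam m j"
    unfolding Wc1 phi_def sum_distrib_left
  proof (intro sum.cong refl)
    fix a assume "a \<in> {..m}"
    hence a: "a \<le> m" by simp
    have e2: "j - (m - a) = d + a" using a j by simp
    have "real (j choose (m - a)) = fact j / (fact (m - a) * fact (d + a))"
      using a j e2 by (subst binomial_fact) auto
    thus "(-lam) ^ a * (fact m * fact d / (fact (m - a) * fact (d + a) * fact a)) =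
        fact m * fact d / fact j * (real (j choose (m - a)) * (-lam) ^ a / fact a)"
      by (simp add: field_simps)
  qed
  have g: "x * J / (F * D^2) * (F * D / J * P)^2 * y = F * (x * y) * P^2 / J"
    if "F \<noteq> 0" "D \<noteq> 0" "J \<noteq> 0" for x y J F D P :: real
    using that by (simp add: field_simps power2_eq_square)
  have l: "lam ^ d * lam ^ m = lam ^ j" unfolding j by (simp add: power_add mult.commute)
  show ?thesis unfolding Phi_def e W qfac_1
    by (simp only: power_one div_by_1 mult_1 g[OF fact_nonzero fact_nonzero fact_nonzero] l)
next
  case False
  then obtain d where m: "m = j + d" and d: "d > 0" using le_Suc_ex[of j m] by (metis add_0_iff linorder_le_cases not_gr_zero)
  have e: "min m j = j" "max m j = m" "adiff m j = d" using m by (auto simp: adiff_def)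
  define f where "f a = real (j choose (m - a)) * (-lam) ^ a / fact a" for a
  have "phi lam m j = (\<Sum>a\<in>{d..m}. f a)"
    unfolding phi_def f_def[symmetric]
  proof (rule sum.mono_neutral_right)
    show "\<forall>i\<in>{..m} - {d..m}. f i = 0"
    proof
      fix i assume "i \<in> {..m} - {d..m}"
      hence "i < d" by auto
      hence "j < m - i" using m by simp
      thus "f i = 0" by (simp add: f_def binomial_eq_0)
    qed
  qed auto
  also have "\<dots> = (\<Sum>k\<in>{0..j}. f (k + d))"
    using sum.shift_bounds_cl_nat_ivl[of f 0 d j] m by (simp add: add.commute)
  also have "\<dots> = (-lam) ^ d / fact d * Wc lam j d 1"
    unfolding Wc1 sum_distrib_left atLeast0AtMost
  proof (intro sum.cong refl)
    fix k assume "k \<in> {..j}"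
    hence k: "k \<le> j" by simp
    have e2: "m - (k + d) = j - k" using m by simp
    have "real (j choose (j - k)) = fact j / (fact (j - k) * fact k)"
      using k by (subst binomial_fact) auto
    thus "f (k + d) = (-lam) ^ d / fact d * ((-lam) ^ k * (fact j * fact d / (fact (j - k) * fact (d + k) * fact k)))"
      unfolding f_def e2 by (simp add: field_simps power_add add.commute)
  qed
  finally have P: "phi lam m j = (-lam) ^ d / fact d * Wc lam j d 1" .
  have l: "lam ^ d * lam ^ m = lam ^ j * ((-lam) ^ d)^2"
  proof -
    have "((-lam) ^ d)^2 = lam ^ d * lam ^ d" by (simp add: power2_eq_square power_mult_distrib[symmetric])
    thus ?thesis unfolding m by (simp add: power_add mult_ac)
  qed
  have g: "x * M / (J * D^2) * W^2 * y = M * z * (c / D * W)^2 / J"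
    if "M \<noteq> 0" "D \<noteq> 0" "J \<noteq> 0" "x * y = z * c^2" for x y z c J M D W :: real
  proof -
    have "x * M / (J * D^2) * W^2 * y = M * (x * y) * W^2 / (J * D^2)" by (simp add: field_simps)
    also have "\<dots> = M * (z * c^2) * W^2 / (J * D^2)" using that by simp
    also have "\<dots> = M * z * (c / D * W)^2 / J" using that by (simp add: field_simps power2_eq_square)
    finally show ?thesis .
  qed
  show ?thesis unfolding Phi_def e P qfac_1
    by (simp only: power_one div_by_1 mult_1 g[OF fact_nonzero fact_nonzero fact_nonzero l])
qed

lemma term_eq:
  fixes lam t :: real assumes lam: "lam \<noteq> 0" and t: "t \<noteq> 0" and k: "k \<le> m"
  shows "(lam * t) ^ (m - k) * (lam * t - lam) ^ (2 * k) / lam ^ m = t ^ m * (- (lam * (2 - (t + 1 / t)))) ^ k"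
proof -
  obtain r where m: "m = k + r" using k le_Suc_ex by blast
  have mk: "m - k = r" using m by simp
  have a: "- (lam * (2 - (t + 1 / t))) = lam * (t - 1)^2 / t" using t by (simp add: field_simps power2_eq_square)
  have b: "(lam * t - lam) ^ (2 * k) = lam ^ k * lam ^ k * ((t - 1)^2) ^ k"
  proof -
    have e: "lam * t - lam = lam * (t - 1)" by (simp add: algebra_simps)
    have "(lam * t - lam) ^ (2 * k) = ((lam * (t - 1))^2) ^ k" unfolding e by (rule power_mult)
    thus ?thesis by (simp add: power_mult_distrib power2_eq_square)
  qed
  show ?thesis unfolding mk a b unfolding m using lam t
    by (simp add: power_add power_mult_distrib power_divide field_simps)
qed

lemma limsum:
  fixes lam t :: real assumes lam: "0 < lam" and t: "t \<noteq> 0"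
  shows "(\<lambda>j. t ^ j * (exp (- lam) * Phi lam m 1 j)) sums
     (t ^ m * exp (lam * (t - 1)) * laguerre0 m (lam * (2 - (t + 1 / t))))"
proof -
  define C where "C = exp (- lam) * fact m / lam ^ m"
  have "(\<lambda>j. C * ((lam * t) ^ j * (phi lam m j)^2 / fact j)) sums
      (C * (exp (lam * t) / fact m * (\<Sum>k\<le>m. real (m choose k) * (lam * t) ^ (m - k) * (lam * t - lam) ^ (2 * k) / fact k)))"
    by (intro sums_mult star)
  moreover have "C * ((lam * t) ^ j * (phi lam m j)^2 / fact j) = t ^ j * (exp (- lam) * Phi lam m 1 j)" for j
  proof -
    have "Phi lam m 1 j = fact m * lam ^ j * (phi lam m j)^2 / fact j / lam ^ m"
      using Phi1[of lam m j] lam by (simp add: field_simps)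
    thus ?thesis unfolding C_def using lam by (simp add: field_simps power_mult_distrib)
  qed
  moreover have "C * (exp (lam * t) / fact m * (\<Sum>k\<le>m. real (m choose k) * (lam * t) ^ (m - k) * (lam * t - lam) ^ (2 * k) / fact k))
      = t ^ m * exp (lam * (t - 1)) * laguerre0 m (lam * (2 - (t + 1 / t)))"
  proof -
    have ex: "exp (- lam) * exp (lam * t) = exp (lam * (t - 1))" by (simp add: exp_add[symmetric] algebra_simps)
    have "C * (exp (lam * t) / fact m * (\<Sum>k\<le>m. real (m choose k) * (lam * t) ^ (m - k) * (lam * t - lam) ^ (2 * k) / fact k))
       = exp (- lam) * exp (lam * t) * (\<Sum>k\<le>m. real (m choose k) * ((lam * t) ^ (m - k) * (lam * t - lam) ^ (2 * k) / lam ^ m) / fact k)"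
      unfolding C_def sum_distrib_left by (intro sum.cong refl) (simp add: field_simps)
    also have "\<dots> = exp (lam * (t - 1)) * (\<Sum>k\<le>m. real (m choose k) * (t ^ m * (- (lam * (2 - (t + 1 / t)))) ^ k) / fact k)"
      unfolding ex using lam t by (intro arg_cong2[where f="(*)"] refl sum.cong) (simp_all add: term_eq)
    also have "\<dots> = t ^ m * exp (lam * (t - 1)) * laguerre0 m (lam * (2 - (t + 1 / t)))"
      unfolding laguerre0_def sum_distrib_left by (intro sum.cong refl) (simp add: field_simps)
    finally show ?thesis .
  qed
  ultimately show ?thesis by simp
qed

lemma qint_mono: "0 \<le> q \<Longrightarrow> a \<le> b \<Longrightarrow> qint q a \<le> qint q b"
  unfolding qint_def by (intro sum_mono2) auto

lemma qint_big:
  fixes q :: real assumes q: "0 < q" "q < 1" and h: "q ^ n0 \<ge> 1/2" and i: "n0 \<le> i"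
  shows "real n0 / 2 \<le> qint q i"
proof -
  have "(\<Sum>l<n0. (1/2::real)) \<le> (\<Sum>l<n0. q ^ l)"
  proof (intro sum_mono)
    fix l assume "l \<in> {..<n0}"
    hence "q ^ n0 \<le> q ^ l" using q by (intro power_decreasing) auto
    thus "1/2 \<le> q ^ l" using h by simp
  qed
  hence "real n0 / 2 \<le> qint q n0" by (simp add: qint_def)
  also have "\<dots> \<le> qint q i" using q i by (intro qint_mono) auto
  finally show ?thesis .
qed

lemma qfac_lower:
  fixes q B :: real assumes q: "0 < q" "q < 1" and Bq: "\<And>i. n0 \<le> i \<Longrightarrow> B \<le> qint q i" and B: "1 \<le> B"
  shows "B ^ d / B ^ n0 \<le> qfac q d"
proof (induction d)
  case 0 thus ?case using B q by (simp add: qfac_def one_le_power)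
next
  case (Suc d)
  show ?case
  proof (cases "Suc d \<le> n0")
    case True
    have "B * B ^ d \<le> B ^ n0" using power_increasing[of "Suc d" n0 B] True B by simp
    hence "B ^ Suc d / B ^ n0 \<le> 1" using B by (simp add: field_simps)
    also have "1 \<le> qfac q (Suc d)" using q by (intro qfac_ge1) simp
    finally show ?thesis .
  next
    case False
    have qi: "B \<le> qint q (Suc d)" using Bq False by simp
    have "B ^ Suc d / B ^ n0 = (B ^ d / B ^ n0) * B" by (simp add: field_simps)
    also have "\<dots> \<le> qfac q d * qint q (Suc d)"
      using Suc qi B q by (intro mult_mono) (auto simp: qfac_def intro!: prod_nonneg qint_nonneg)
    also have "\<dots> = qfac q (Suc d)" by (simp add: qfac_def)
    finally show ?thesis .
  qed
qed

lemma qfac_add: "qfac q (d + n) = qfac q d * (\<Prod>i<n. qint q (d + 1 + i))"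
  by (induction n) (simp_all add: qfac_def)

lemma Wc_bound:
  fixes q lam :: real assumes q: "0 < q" "q < 1" and hm: "q ^ m \<ge> 1/2" and n: "n \<le> m" and lam: "0 \<le> lam"
  shows "\<bar>Wc lam n d q\<bar> \<le> (\<Sum>k\<le>m. (2 * lam * m) ^ k)"
proof -
  have "\<bar>Wc lam n d q\<bar> \<le> (\<Sum>k\<le>n. \<bar>(-1) ^ k * q ^ k * lam ^ k *
      (\<Prod>i<k. qint q (n - i) / q ^ (n - i) / (qint q (d + 1 + i) * qint q (i + 1)))\<bar>)"
    unfolding Wc_def by (rule sum_abs)
  also have "\<dots> \<le> (\<Sum>k\<le>n. (2 * lam * m) ^ k)"
  proof (intro sum_mono)
    fix k assume "k \<in> {..n}"
    have f: "\<bar>qint q (n - i) / q ^ (n - i) / (qint q (d + 1 + i) * qint q (i + 1))\<bar> \<le> 2 * m" for i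
    proof -
      have d1: "1 \<le> qint q (d + 1 + i)" "1 \<le> qint q (i + 1)" using q by (auto intro: qint_ge1)
      have n1: "0 \<le> qint q (n - i)" "qint q (n - i) \<le> m"
        using q qint_le[of q "n - i"] n by (auto intro: qint_nonneg)
      have "q ^ m \<le> q ^ (n - i)" using q n by (intro power_decreasing) auto
      hence "1/2 \<le> q ^ (n - i)" using hm by linarith
      hence p: "1 / q ^ (n - i) \<le> 2" using q by (simp add: field_simps)
      have "\<bar>qint q (n - i) / q ^ (n - i) / (qint q (d + 1 + i) * qint q (i + 1))\<bar>
          = qint q (n - i) * (1 / q ^ (n - i)) / (qint q (d + 1 + i) * qint q (i + 1))"
        using d1 n1 q by (simp add: abs_mult abs_divide)
      also have "\<dots> \<le> qint q (n - i) * (1 / q ^ (n - i)) / 1"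
      proof (rule divide_left_mono)
        have "1 * 1 \<le> qint q (d + 1 + i) * qint q (i + 1)" by (rule mult_mono) (use d1 in auto)
        thus "1 \<le> qint q (d + 1 + i) * qint q (i + 1)" by simp
        show "0 \<le> qint q (n - i) * (1 / q ^ (n - i))" using n1 q by simp
        show "0 < qint q (d + 1 + i) * qint q (i + 1) * 1" using d1 by simp
      qed
      also have "\<dots> \<le> real m * 2" using n1 p q by (simp only: div_by_1, intro mult_mono) auto
      finally show ?thesis by simp
    qed
    have "\<bar>(-1) ^ k * q ^ k * lam ^ k * (\<Prod>i<k. qint q (n - i) / q ^ (n - i) / (qint q (d + 1 + i) * qint q (i + 1)))\<bar>
        = q ^ k * lam ^ k * (\<Prod>i<k. \<bar>qint q (n - i) / q ^ (n - i) / (qint q (d + 1 + i) * qint q (i + 1))\<bar>)"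
      using q lam by (simp add: abs_mult power_abs abs_prod)
    also have "\<dots> \<le> 1 * lam ^ k * (\<Prod>i<k. 2 * real m)"
      using q lam f by (intro mult_mono prod_mono) (auto simp: power_le_one prod_nonneg)
    also have "\<dots> = (2 * lam * m) ^ k" by (simp add: power_mult_distrib)
    finally show "\<bar>(-1) ^ k * q ^ k * lam ^ k * (\<Prod>i<k. qint q (n - i) / q ^ (n - i) / (qint q (d + 1 + i) * qint q (i + 1)))\<bar>
        \<le> (2 * lam * m) ^ k" .
  qed
  also have "\<dots> \<le> (\<Sum>k\<le>m. (2 * lam * m) ^ k)" using n lam by (intro sum_mono2) auto
  finally show ?thesis .
qed

lemma pow_le_exp:
  fixes x :: real assumes "0 \<le> x" shows "x ^ m \<le> fact m * exp x"
proof -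
  have s: "summable (\<lambda>n. x ^ n / fact n)" using exp_converges[of x] by (simp add: sums_summable divide_inverse mult.commute)
  have e: "exp x = (\<Sum>n. x ^ n / fact n)" using exp_converges[of x] by (simp add: sums_unique divide_inverse mult.commute)
  have "x ^ m / fact m = (\<Sum>n\<in>{m}. x ^ n / fact n)" by simp
  also have "\<dots> \<le> exp x" unfolding e by (rule sum_le_suminf[OF s]) (use assms in auto)
  finally show ?thesis by (simp add: field_simps)
qed

lemma Phi_bound:
  fixes q lam B :: real
  assumes q: "0 < q" "q < 1" and hn: "q ^ n0 \<ge> 1/2" and mn: "m \<le> n0"
    and Bq: "\<And>i. n0 \<le> i \<Longrightarrow> B \<le> qint q i" and B: "1 \<le> B" and lam: "0 < lam" and lB: "lam \<le> B"
  shows "0 \<le> Phi lam m q j"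
    "Phi lam m q j \<le> 2 ^ j * B ^ n0 * (lam / B) ^ j * (B / lam) ^ m * (real (j + m)) ^ m * (\<Sum>k\<le>m. (2 * lam * m) ^ k)^2"
proof -
  define n where "n = min m j"
  define M where "M = max m j"
  define d where "d = adiff m j"
  define CW where "CW = (\<Sum>k\<le>m. (2 * lam * m) ^ k)"
  have Md: "M = d + n" unfolding M_def n_def d_def adiff_def by auto
  have nm: "n \<le> m" unfolding n_def by auto
  have Mjm: "M \<le> j + m" unfolding M_def by auto
  have "q ^ n0 \<le> q ^ m" by (rule power_decreasing[OF mn]) (use q in auto)
  hence hm: "q ^ m \<ge> 1/2" using hn by linarith
  have qf: "\<And>k. qfac q k > 0" using q by (intro qfac_pos) auto
  define f1 where "f1 = q ^ (2 * (n choose 2))"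
  define f2 where "f2 = 1 / q ^ (m * j)"
  define f3 where "f3 = lam ^ d / qfac q d"
  define f4 where "f4 = qfac q M / (qfac q n * qfac q d)"
  define f5 where "f5 = (Wc lam n d q)^2"
  have P: "Phi lam m q j = f1 * f2 * f3 * f4 * f5"
    unfolding Phi_def n_def[symmetric] M_def[symmetric] d_def[symmetric] f1_def f2_def f3_def f4_def f5_def
    using qf q by (simp add: field_simps power2_eq_square)
  have f1: "0 \<le> f1" "f1 \<le> 1" unfolding f1_def using q by (auto simp: power_le_one)
  have f2: "0 \<le> f2" "f2 \<le> 2 ^ j"
  proof -
    show "0 \<le> f2" unfolding f2_def using q by simp
    have "(1/2) ^ j \<le> (q ^ m) ^ j" using hm by (intro power_mono) auto
    hence "(1/2) ^ j \<le> q ^ (m * j)" by (simp add: power_mult)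
    hence "1 / q ^ (m * j) \<le> 1 / (1/2) ^ j" using q by (intro divide_left_mono) auto
    thus "f2 \<le> 2 ^ j" unfolding f2_def by (simp add: power_one_over)
  qed
  have f3: "0 \<le> f3" "f3 \<le> B ^ n0 * ((lam / B) ^ j * (B / lam) ^ m)"
  proof -
    show "0 \<le> f3" unfolding f3_def using lam qf[of d] by simp
    have lo: "B ^ d / B ^ n0 \<le> qfac q d" by (rule qfac_lower[OF q Bq B])
    have "lam ^ d / qfac q d \<le> lam ^ d / (B ^ d / B ^ n0)"
      using lo lam B qf[of d] by (intro divide_left_mono) auto
    also have "\<dots> = B ^ n0 * (lam / B) ^ d" using B by (simp add: field_simps power_divide)
    also have "(lam / B) ^ d \<le> (lam / B) ^ j * (B / lam) ^ m"
    proof (cases "m \<le> j")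
      case True
      then obtain e where j: "j = m + e" using le_Suc_ex by blast
      have "d = e" unfolding d_def adiff_def j by simp
      thus ?thesis unfolding j using lam B by (simp add: power_add field_simps power_divide)
    next
      case False
      then obtain e where m: "m = j + e" using le_Suc_ex[of j m] by auto
      have de: "d = e" unfolding d_def adiff_def m by simp
      have "(lam / B) ^ j * (B / lam) ^ m = (B / lam) ^ e"
        unfolding m using lam B by (simp add: power_add field_simps power_divide)
      moreover have "(lam / B) ^ e \<le> 1" using lam lB B by (intro power_le_one) auto
      moreover have "1 \<le> (B / lam) ^ e" using lam lB by (intro one_le_power) auto
      ultimately show ?thesis unfolding de by linarith
    qed
    hence "B ^ n0 * (lam / B) ^ d \<le> B ^ n0 * ((lam / B) ^ j * (B / lam) ^ m)"
      using B by (intro mult_left_mono) auto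
    finally show "f3 \<le> B ^ n0 * ((lam / B) ^ j * (B / lam) ^ m)" unfolding f3_def .
  qed
  have f4: "0 \<le> f4" "f4 \<le> real (j + m) ^ m"
  proof -
    show "0 \<le> f4" unfolding f4_def using qf by (simp add: less_imp_le)
    have pr: "(\<Prod>i<n. qint q (d + 1 + i)) \<le> (\<Prod>i<n. real (j + m))"
    proof (intro prod_mono conjI)
      fix i assume "i \<in> {..<n}"
      hence "d + 1 + i \<le> j + m" using Md Mjm by auto
      thus "qint q (d + 1 + i) \<le> real (j + m)" using qint_le[of q "d + 1 + i"] q by auto
      show "0 \<le> qint q (d + 1 + i)" using q by (intro qint_nonneg) auto
    qed
    have "f4 = (\<Prod>i<n. qint q (d + 1 + i)) / qfac q n"
      unfolding f4_def Md qfac_add using qf[of d] qf[of n] by (simp add: field_simps)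
    also have "\<dots> \<le> (\<Prod>i<n. qint q (d + 1 + i)) / 1"
      using qfac_ge1[of q n] q by (intro divide_left_mono) (auto intro!: prod_nonneg qint_nonneg)
    also have "\<dots> \<le> real (j + m) ^ n" using pr by simp
    also have "\<dots> \<le> real (j + m) ^ m"
    proof (cases "j + m = 0")
      case True thus ?thesis using nm by simp
    next
      case False thus ?thesis using nm by (intro power_increasing) auto
    qed
    finally show "f4 \<le> real (j + m) ^ m" .
  qed
  have f5: "0 \<le> f5" "f5 \<le> CW ^ 2"
  proof -
    show "0 \<le> f5" unfolding f5_def by simp
    have "\<bar>Wc lam n d q\<bar> \<le> CW" unfolding CW_def by (rule Wc_bound[OF q hm nm]) (use lam in simp)
    hence "\<bar>Wc lam n d q\<bar>^2 \<le> CW^2" by (intro power_mono) auto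
    thus "f5 \<le> CW ^ 2" unfolding f5_def by simp
  qed
  have "f1 * f2 * f3 * f4 * f5 \<le> 1 * 2 ^ j * (B ^ n0 * ((lam / B) ^ j * (B / lam) ^ m)) * real (j + m) ^ m * CW ^ 2"
    using f1 f2 f3 f4 f5 B lam by (intro mult_mono mult_nonneg_nonneg) auto
  thus "Phi lam m q j \<le> 2 ^ j * B ^ n0 * (lam / B) ^ j * (B / lam) ^ m * (real (j + m)) ^ m * (\<Sum>k\<le>m. (2 * lam * m) ^ k)^2"
    unfolding P CW_def by (simp add: mult_ac)
  show "0 \<le> Phi lam m q j" unfolding P using f1 f2 f3 f4 f5 by simp
qed

lemma part2:
  fixes m :: nat and lam t :: real
  assumes "m \<noteq> 0 \<and> 0 < lam \<and> 0 < \<bar>t\<bar> \<and> \<bar>t\<bar> \<le> 1"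
  shows "((\<lambda>q. gen_euler_pgf lam q m t) \<longlongrightarrow>
               t ^ m * exp (lam * (t - 1)) * laguerre0 m (lam * (2 - (t + 1 / t)))) (at_left 1)"
proof -
  have lam: "0 < lam" and t0: "t \<noteq> 0" and t1: "\<bar>t\<bar> \<le> 1" using assms by auto
  define n0 where "n0 = nat \<lceil>4 * exp 1 * lam\<rceil> + m + 2"
  define B where "B = real n0 / 2"
  define CW where "CW = (\<Sum>k\<le>m. (2 * lam * m) ^ k)"
  define rho where "rho = 2 * exp 1 * lam / B"
  define K where "K = B ^ n0 * (B / lam) ^ m * fact m * exp (real m) * CW ^ 2"
  define E where "E = exp (- lam) + 1"
  have n0: "m \<le> n0" "real n0 \<ge> 4 * exp 1 * lam + 2" unfolding n0_def by linarith+
  have el: "4 * exp 1 * lam \<ge> 4 * lam" using lam by simp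
  have n2: "real n0 \<ge> 2" "real n0 \<ge> 2 * lam" using n0 lam el by linarith+
  have B: "1 \<le> B" "lam \<le> B" "0 < B" using n2 unfolding B_def by auto
  have rho: "0 \<le> rho" "rho < 1" using n0 lam B unfolding rho_def B_def by (auto simp: field_simps)
  have E0: "0 \<le> E" unfolding E_def by (simp add: add_nonneg_nonneg)
  have ev1: "eventually (\<lambda>q. 0 < q \<and> q < 1) (at_left (1::real))" by (rule ev_q01)
  have "((\<lambda>q::real. q ^ n0) \<longlongrightarrow> 1 ^ n0) (at_left 1)" by (intro tendsto_intros)
  hence ev2: "eventually (\<lambda>q::real. q ^ n0 > 1/2) (at_left 1)" by (rule order_tendstoD) simp
  have L: "((\<lambda>q. inverse (normN q m lam)) \<longlongrightarrow> exp (- lam)) (at_left 1)" by (rule invN_lim[OF lam])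
  have ev3: "eventually (\<lambda>q. inverse (normN q m lam) < exp (- lam) + 1) (at_left 1)"
    by (rule order_tendstoD(2)[OF L]) simp
  have ev4: "eventually (\<lambda>q. inverse (normN q m lam) > exp (- lam) - 1) (at_left 1)"
    by (rule order_tendstoD(1)[OF L]) simp
  have bnd: "eventually (\<lambda>q. \<forall>j. norm (t ^ j * gen_euler_pmf lam q m j) \<le> E * K * rho ^ j) (at_left 1)"
    using ev1 ev2 ev3 ev4
  proof eventually_elim
    case (elim q)
    hence q: "0 < q" "q < 1" and hq: "q ^ n0 \<ge> 1/2" by auto
    have iN: "\<bar>inverse (normN q m lam)\<bar> \<le> E" unfolding E_def using elim exp_gt_zero[of "-lam"] by linarith
    have Bq: "B \<le> qint q i" if "n0 \<le> i" for i unfolding B_def by (rule qint_big[OF q hq that])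
    show ?case
    proof
      fix j
      have P0: "0 \<le> Phi lam m q j" by (rule Phi_bound(1)[OF q hq n0(1) Bq B(1) lam B(2)])
      have P1: "Phi lam m q j \<le> 2 ^ j * B ^ n0 * (lam / B) ^ j * (B / lam) ^ m * (real (j + m)) ^ m * CW^2"
        unfolding CW_def by (rule Phi_bound(2)[OF q hq n0(1) Bq B(1) lam B(2)])
      have "real (j + m) ^ m \<le> fact m * exp (real (j + m))" by (rule pow_le_exp) simp
      also have "exp (real (j + m)) = exp 1 ^ j * exp (real m)"
        using exp_of_nat_mult[of j 1] by (simp add: exp_add)
      finally have jm: "real (j + m) ^ m \<le> fact m * (exp 1 ^ j * exp (real m))" .
      have "Phi lam m q j \<le> 2 ^ j * B ^ n0 * (lam / B) ^ j * (B / lam) ^ m * (fact m * (exp 1 ^ j * exp (real m))) * CW^2"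
        using P1 jm B lam by (smt (verit) mult_left_mono mult_right_mono zero_le_power zero_le_mult_iff divide_nonneg_nonneg zero_le_power2 power_0 power_add)
      also have "\<dots> = K * rho ^ j" unfolding K_def rho_def
        by (simp add: power_mult_distrib power_divide field_simps)
      finally have P2: "Phi lam m q j \<le> K * rho ^ j" .
      have "norm (t ^ j * gen_euler_pmf lam q m j) = \<bar>t\<bar> ^ j * (\<bar>inverse (normN q m lam)\<bar> * Phi lam m q j)"
        unfolding pmf_Phi[OF q] using P0 by (simp add: abs_mult power_abs)
      also have "\<dots> \<le> 1 * (E * (K * rho ^ j))"
        using t1 iN P0 P2 E0 by (intro mult_mono) (auto simp: power_le_one)
      finally show "norm (t ^ j * gen_euler_pmf lam q m j) \<le> E * K * rho ^ j" by (simp add: mult_ac)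
    qed
  qed
  have bnd2: "eventually (\<lambda>(j, q). norm (t ^ j * gen_euler_pmf lam q m j) \<le> E * K * rho ^ j) (at_top \<times>\<^sub>F at_left 1)"
    unfolding eventually_prod_filter using bnd by (intro exI[of _ "\<lambda>_. True"] exI[of _ "\<lambda>q. \<forall>j. norm (t ^ j * gen_euler_pmf lam q m j) \<le> E * K * rho ^ j"]) auto
  have sm: "summable (\<lambda>j. E * K * rho ^ j)" using rho by (intro summable_mult summable_geometric) auto
  have lim: "\<And>j. ((\<lambda>q. t ^ j * gen_euler_pmf lam q m j) \<longlongrightarrow> t ^ j * (exp (- lam) * Phi lam m 1 j)) (at_left 1)"
    by (intro tendsto_intros pmf_lim lam)
  have "((\<lambda>q. \<Sum>j. t ^ j * gen_euler_pmf lam q m j) \<longlongrightarrow> (\<Sum>j. t ^ j * (exp (- lam) * Phi lam m 1 j))) (at_left 1)"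
    using tannerys_theorem[where a="\<lambda>j q. t ^ j * gen_euler_pmf lam q m j", OF lim bnd2 sm] by simp
  moreover have "(\<Sum>j. t ^ j * (exp (- lam) * Phi lam m 1 j)) = t ^ m * exp (lam * (t - 1)) * laguerre0 m (lam * (2 - (t + 1 / t)))"
    using sums_unique[OF limsum[OF lam t0]] by simp
  ultimately show ?thesis unfolding gen_euler_pgf_def by simp
qed

theorem mainTheorem2:
  shows "(\<forall>(q::real) (lam::real) (t::real).
            0 < q \<and> q < 1 \<and> 0 < lam \<and> lam < q ^ 0 / (1 - q) \<and> \<bar>t\<bar> \<le> 1 \<longrightarrow>
            (\<lambda>j. t ^ j * gen_euler_pmf lam q 0 j) sums
              (qpoch_inf ((1 - q) * lam) q / qpoch_inf ((1 - q) * lam * t) q))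
       \<and> (\<forall>(m::nat) (lam::real) (t::real).
            m \<noteq> 0 \<and> 0 < lam \<and> 0 < \<bar>t\<bar> \<and> \<bar>t\<bar> \<le> 1 \<longrightarrow>
            ((\<lambda>q. gen_euler_pgf lam q m t) \<longlongrightarrow>
               t ^ m * exp (lam * (t - 1)) * laguerre0 m (lam * (2 - (t + 1 / t)))) (at_left 1))"
proof (intro conjI allI impI)
  fix q lam t :: real
  assume "0 < q \<and> q < 1 \<and> 0 < lam \<and> lam < q ^ 0 / (1 - q) \<and> \<bar>t\<bar> \<le> 1"
  thus "(\<lambda>j. t ^ j * gen_euler_pmf lam q 0 j) sums
              (qpoch_inf ((1 - q) * lam) q / qpoch_inf ((1 - q) * lam * t) q)" by (rule part1)
next
  fix m :: nat and lam t :: real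
  assume "m \<noteq> 0 \<and> 0 < lam \<and> 0 < \<bar>t\<bar> \<and> \<bar>t\<bar> \<le> 1"
  thus "((\<lambda>q. gen_euler_pgf lam q m t) \<longlongrightarrow>
               t ^ m * exp (lam * (t - 1)) * laguerre0 m (lam * (2 - (t + 1 / t)))) (at_left 1)" by (rule part2)
qed

end
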